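(* There is a constant $C>0$ such that for all $a\neq b$ in $\mathbb{R}/\tau\mathbb{Z}$ and all $\phi\in\mathbb{R}$, $$\sum_{n\in Z(a,b)}w(n-\phi)^{3/2}\le C\,\frac{\sum_{n\in Z(a,b)}w(n-\phi)^{5/2}}{\sum_{n\in Z(a,b)}w(n-\phi)}.$$
   Context: $\tau=\frac{1+\sqrt5}{2}$; $w(x)=\frac1\pi\left(\tan^{-1}(x+1)-\tan^{-1}(x)\right)$. For real $x$, $x\bmod\tau$ is its image in $\mathbb{R}/\tau\mathbb{Z}$. For $a,b\in\mathbb{R}/\tau\mathbb{Z}$, $(a,b)$ denotes the open arc from $a$ to $b$ in the positive direction, and $Z(a,b)$ is the set of integers $n$ with $n\bmod\tau\in(a,b)$. The constant $C$ is independent of all variables. *)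

theory Defs
  imports "HOL-Analysis.Analysis"
begin

definition tau :: real where
  "tau = (1 + sqrt 5) / 2"

definition w :: "real \<Rightarrow> real" where
  "w x = (arctan (x + 1) - arctan x) / pi"

definition rmod :: "real \<Rightarrow> real \<Rightarrow> real" where
  "rmod x t = x - t * of_int \<lfloor>x / t\<rfloor>"

text \<open>Points of R/tauZ are represented by real numbers a; two reals represent the
same point iff rmod a tau = rmod b tau. The open arc (a,b) from a to b in the
positive direction consists of the classes x with 0 < (x - a) mod tau < (b - a) mod tau.\<close>
definition in_arc :: "real \<Rightarrow> real \<Rightarrow> real \<Rightarrow> bool" where
  "in_arc a b x \<longleftrightarrow> 0 < rmod (x - a) tau \<and> rmod (x - a) tau < rmod (b - a) tau"

definition Zab :: "real \<Rightarrow> real \<Rightarrow> int set" where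
  "Zab a b = {n :: int. in_arc a b (of_int n)}"

end

theory Submission
  imports Defs
begin


lemma sqrt5_bounds: "(2236/1000) < sqrt 5" "sqrt 5 < (22361/10000)"
proof -
  have "sqrt ((2236/1000)^2) < sqrt 5" by (subst real_sqrt_less_iff) (simp add: power2_eq_square)
  then show "(2236/1000) < sqrt 5" by simp
  have "sqrt 5 < sqrt ((22361/10000)^2)" by (subst real_sqrt_less_iff) (simp add: power2_eq_square)
  then show "sqrt 5 < (22361/10000)" by simp
qed

lemma tau_sq: "tau^2 = tau + 1"
  unfolding tau_def by (simp add: power2_eq_square field_simps)

lemma tau_bounds: "(1618/1000) < tau" "tau < (16181/10000)"
  using sqrt5_bounds unfolding tau_def by auto

lemma sqrt5_tau: "sqrt 5 = 2*tau - 1" unfolding tau_def by (simp add: field_simps)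

lemma rmod_eqI:
  assumes "t > 0" "0 \<le> x - t * of_int j" "x - t * of_int j < t"
  shows "rmod x t = x - t * of_int j"
proof -
  have "of_int j \<le> x / t" using assms by (simp add: field_simps)
  moreover have "x / t < of_int j + 1" using assms by (simp add: field_simps)
  ultimately have "\<lfloor>x / t\<rfloor> = j" by (simp add: floor_eq_iff)
  then show ?thesis unfolding rmod_def by simp
qed

lemma rmod_bounds:
  assumes "t > 0" shows "0 \<le> rmod x t" "rmod x t < t"
proof -
  have a: "of_int \<lfloor>x/t\<rfloor> \<le> x/t" "x/t < of_int \<lfloor>x/t\<rfloor> + 1" by linarith+
  have "t * of_int \<lfloor>x/t\<rfloor> \<le> t * (x/t)" using a(1) assms by (intro mult_left_mono) auto
  then show "0 \<le> rmod x t" using assms unfolding rmod_def by simp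
  have "t * (x/t) < t * (of_int \<lfloor>x/t\<rfloor> + 1)" using a(2) assms by (intro mult_strict_left_mono) auto
  then show "rmod x t < t" using assms unfolding rmod_def by (simp add: algebra_simps)
qed

lemma tau_pos: "tau > 0" using tau_bounds by simp

lemma ell_pos:
  assumes "rmod a tau \<noteq> rmod b tau"
  shows "0 < rmod (b - a) tau"
proof (rule ccontr)
  assume "\<not> 0 < rmod (b - a) tau"
  then have "rmod (b - a) tau = 0" using rmod_bounds[OF tau_pos, of "b-a"] by simp
  then have e: "b = a + tau * of_int \<lfloor>(b-a)/tau\<rfloor>" unfolding rmod_def by simp
  define i where "i = \<lfloor>(b-a)/tau\<rfloor>"
  have "b / tau = a / tau + of_int i" using e tau_pos unfolding i_def by (simp add: field_simps)
  then have "\<lfloor>b/tau\<rfloor> = \<lfloor>a/tau\<rfloor> + i" by simp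
  then have "rmod b tau = rmod a tau" unfolding rmod_def using e i_def by (simp add: algebra_simps)
  then show False using assms by simp
qed

lemma no_zero_aux: "\<forall>k j::int. nat \<bar>k\<bar> = N \<longrightarrow> k \<noteq> 0 \<longrightarrow> k^2 - k*j - j^2 \<noteq> 0"
proof (induction N rule: less_induct)
  case (less N)
  show ?case
  proof (intro allI impI)
    fix k j :: int
    assume N: "nat \<bar>k\<bar> = N" and k0: "k \<noteq> 0"
    show "k^2 - k*j - j^2 \<noteq> 0"
    proof
      assume eq: "k^2 - k*j - j^2 = 0"
      have r: "k^2 - k*j - j^2 = k*(k-j) - j*j" by (simp add: power2_eq_square algebra_simps)
      have "even (k*(k-j) - j*j)" using eq r by simp
      then have ek: "even k" and ej: "even j" by (auto simp: even_mult_iff)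
      then obtain k' j' where kk: "k = 2*k'" and jj: "j = 2*j'" by (auto elim!: evenE)
      have "4*(k'^2 - k'*j' - j'^2) = 0" using eq kk jj by (simp add: power2_eq_square algebra_simps)
      then have eq': "k'^2 - k'*j' - j'^2 = 0" by simp
      have "nat \<bar>k'\<bar> < N" using N kk k0 by auto
      moreover have "k' \<noteq> 0" using kk k0 by auto
      ultimately show False using less eq' by blast
    qed
  qed
qed

lemma no_zero: "(k::int) \<noteq> 0 \<Longrightarrow> k^2 - k*j - j^2 \<noteq> 0"
  using no_zero_aux by blast



lemma mem_Zab: "n \<in> Zab a b \<longleftrightarrow> 0 < rmod (of_int n - a) tau \<and> rmod (of_int n - a) tau < rmod (b - a) tau"
  unfolding Zab_def in_arc_def by simp

lemma gap:
  assumes m: "m \<in> Zab a b" and n: "n \<in> Zab a b" and mn: "m \<noteq> n"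
  shows "1 \<le> 7 * rmod (b-a) tau * \<bar>real_of_int (m - n)\<bar>"
proof -
  define l where "l = rmod (b-a) tau"
  have lt: "l < tau" unfolding l_def using rmod_bounds[OF tau_pos] by simp
  define i1 where "i1 = \<lfloor>(of_int m - a)/tau\<rfloor>"
  define i2 where "i2 = \<lfloor>(of_int n - a)/tau\<rfloor>"
  have r1: "0 < (of_int m - a) - tau * of_int i1" "(of_int m - a) - tau * of_int i1 < l"
    using m unfolding mem_Zab rmod_def i1_def l_def by auto
  have r2: "0 < (of_int n - a) - tau * of_int i2" "(of_int n - a) - tau * of_int i2 < l"
    using n unfolding mem_Zab rmod_def i2_def l_def by auto
  define k where "k = m - n"
  define j where "j = i1 - i2"
  have k0: "k \<noteq> 0" using mn k_def by simp
  define X where "X = real_of_int k - real_of_int j * tau"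
  define Y where "Y = real_of_int k - real_of_int j + real_of_int j * tau"
  have Xl: "\<bar>X\<bar> < l" using r1 r2 unfolding X_def k_def j_def by (simp add: algebra_simps)
  have "X * Y = real_of_int k ^ 2 - real_of_int k * real_of_int j - real_of_int j ^ 2 + real_of_int j ^ 2 * (tau + 1 - tau^2)"
    unfolding X_def Y_def by (simp add: algebra_simps power2_eq_square)
  then have "X * Y = real_of_int (k^2 - k*j - j^2)" using tau_sq by simp
  moreover have "k^2 - k*j - j^2 \<noteq> 0" using no_zero[OF k0] .
  ultimately have XY: "1 \<le> \<bar>X\<bar> * \<bar>Y\<bar>"
    by (metis abs_mult of_int_1_le_iff of_int_abs zero_less_abs_iff int_one_le_iff_zero_less)
  have k1: "1 \<le> \<bar>real_of_int k\<bar>" using k0 by linarith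
  have jt: "\<bar>real_of_int j\<bar> * tau \<le> \<bar>real_of_int k\<bar> + \<bar>X\<bar>"
  proof -
    have "real_of_int j * tau = real_of_int k - X" unfolding X_def by simp
    moreover have "\<bar>real_of_int j * tau\<bar> = \<bar>real_of_int j\<bar> * tau" using tau_pos by (simp add: abs_mult)
    ultimately have "\<bar>real_of_int j\<bar> * tau = \<bar>real_of_int k - X\<bar>" by simp
    then show ?thesis by linarith
  qed
  have Xk: "\<bar>X\<bar> \<le> (16181/10000) * \<bar>real_of_int k\<bar>" using Xl lt tau_bounds k1 by linarith
  have jb: "\<bar>real_of_int j\<bar> * (1618/1000) \<le> (26181/10000) * \<bar>real_of_int k\<bar>"
  proof -
    have "\<bar>real_of_int j\<bar> * (1618/1000) \<le> \<bar>real_of_int j\<bar> * tau"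
      using tau_bounds by (intro mult_left_mono) auto
    then show ?thesis using jt Xk by linarith
  qed
  have Yb: "\<bar>Y\<bar> \<le> \<bar>X\<bar> + \<bar>real_of_int j\<bar> * (2*tau - 1)"
  proof -
    have "Y = X + real_of_int j * (2*tau - 1)" unfolding X_def Y_def by (simp add: algebra_simps)
    moreover have "\<bar>real_of_int j * (2*tau - 1)\<bar> = \<bar>real_of_int j\<bar> * (2*tau - 1)"
      using tau_bounds by (simp add: abs_mult)
    moreover have "\<bar>X + real_of_int j * (2*tau - 1)\<bar> \<le> \<bar>X\<bar> + \<bar>real_of_int j * (2*tau - 1)\<bar>"
      by (rule abs_triangle_ineq)
    ultimately show ?thesis by simp
  qed
  have "\<bar>real_of_int j\<bar> * (2*tau - 1) \<le> \<bar>real_of_int j\<bar> * (22362/10000)"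
    using tau_bounds by (intro mult_left_mono) auto
  then have Y7: "\<bar>Y\<bar> \<le> 7 * \<bar>real_of_int k\<bar>" using Yb Xk jb by linarith
  have "1 \<le> \<bar>X\<bar> * \<bar>Y\<bar>" by (rule XY)
  also have "\<dots> \<le> l * (7 * \<bar>real_of_int k\<bar>)"
    using Xl Y7 by (intro mult_mono) auto
  finally show ?thesis unfolding l_def k_def by simp
qed

lemma box: "\<exists>n j::int. t < of_int n - of_int j*tau \<and> of_int n - of_int j*tau < t + 2/tau^k \<and>
   s < of_int n - of_int j + of_int j*tau \<and> of_int n - of_int j + of_int j*tau < s + 4*tau^k"
proof (induction k arbitrary: t s)
  case 0
  define j where "j = \<lceil>(s - t)/sqrt 5\<rceil>"
  define n where "n = \<lfloor>t + of_int j * tau\<rfloor> + 1"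
  have s5: "sqrt 5 > 0" by simp
  have j1: "s - t \<le> of_int j * sqrt 5" "of_int j * sqrt 5 < s - t + sqrt 5"
  proof -
    have "(s-t)/sqrt 5 \<le> of_int j" "of_int j < (s-t)/sqrt 5 + 1" unfolding j_def by linarith+
    then show "s - t \<le> of_int j * sqrt 5" "of_int j * sqrt 5 < s - t + sqrt 5"
      using s5 by (simp_all add: field_simps)
  qed
  have n1: "t + of_int j * tau < of_int n" "of_int n \<le> t + of_int j * tau + 1"
    unfolding n_def by linarith+
  have e: "of_int n - of_int j + of_int j * tau = (of_int n - of_int j * tau) + of_int j * sqrt 5"
    unfolding sqrt5_tau by (simp add: algebra_simps)
  show ?case
    apply (rule exI[of _ n], rule exI[of _ j])
    apply (simp only: power_0 div_by_1 mult_1_right)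
    using n1 j1 e sqrt5_bounds by (intro conjI; linarith)
next
  case (Suc k)
  obtain n j :: int where h: "t*tau < of_int n - of_int j*tau" "of_int n - of_int j*tau < t*tau + 2/tau^k"
    "-s/tau - 4*tau^k < of_int n - of_int j + of_int j*tau" "of_int n - of_int j + of_int j*tau < -s/tau"
    using Suc.IH[of "t*tau" "-s/tau - 4*tau^k"] by auto
  define z where "z = of_int n - of_int j*tau"
  define z' where "z' = of_int n - of_int j + of_int j*tau"
  have e1: "of_int (-n-j) - of_int (-n) * tau = z / tau"
  proof -
    have "tau * (of_int (-n-j) - of_int (-n) * tau) = of_int n * (tau^2 - tau) - of_int j * tau"
      by (simp add: algebra_simps power2_eq_square)
    also have "\<dots> = z" unfolding z_def using tau_sq by simp
    finally show ?thesis using tau_pos by (simp add: field_simps)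
  qed
  have e2: "of_int (-n-j) - of_int (-n) + of_int (-n) * tau = - tau * z'"
  proof -
    have "- tau * z' = - of_int n * tau + of_int j * tau - of_int j * tau^2"
      unfolding z'_def by (simp add: algebra_simps power2_eq_square)
    also have "\<dots> = - of_int n * tau - of_int j" using tau_sq by (simp add: algebra_simps)
    finally show ?thesis by simp
  qed
  have b1: "t < z / tau" "z / tau < t + 2/tau^Suc k"
  proof -
    show "t < z / tau" using h(1) tau_pos unfolding z_def by (simp add: field_simps)
    have "z / tau < (t*tau + 2/tau^k)/tau" using h(2) tau_pos unfolding z_def
      by (intro divide_strict_right_mono) auto
    also have "(t*tau + 2/tau^k)/tau = t + 2/tau^Suc k" using tau_pos by (simp add: field_simps)
    finally show "z / tau < t + 2/tau^Suc k" .
  qed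
  have b2: "s < - tau * z'" "- tau * z' < s + 4*tau^Suc k"
    using h(3,4) tau_pos unfolding z'_def by (simp_all add: field_simps)
  show ?case
    apply (rule exI[of _ "-n-j"], rule exI[of _ "-n"])
    using b1 b2 e1 e2 by simp
qed



lemma cover:
  assumes lpos: "0 < rmod (b-a) tau"
  shows "\<exists>n \<in> Zab a b. \<bar>of_int n - phi\<bar> \<le> 11 / rmod (b-a) tau"
proof -
  define l where "l = rmod (b-a) tau"
  have l0: "0 < l" using lpos l_def by simp
  have lt: "l < tau" unfolding l_def using rmod_bounds[OF tau_pos] by simp
  have t1: "1 < tau" using tau_bounds by simp
  have ex: "\<exists>k. 2/tau^k \<le> l"
  proof -
    obtain k where "2/l < tau^k" using real_arch_pow[OF t1] by blast
    then have "2/tau^k \<le> l" using l0 tau_pos by (simp add: field_simps)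
    then show ?thesis by blast
  qed
  define k where "k = (LEAST k. 2/tau^k \<le> l)"
  have kP: "2/tau^k \<le> l" unfolding k_def using LeastI_ex[OF ex] .
  have k0: "k \<noteq> 0"
  proof
    assume "k = 0"
    then have "2 \<le> l" using kP by simp
    then show False using lt tau_bounds by linarith
  qed
  then obtain k' where kk: "k = Suc k'" by (cases k) auto
  have "\<not> 2/tau^k' \<le> l" using not_less_Least[of k' "\<lambda>k. 2/tau^k \<le> l"] kk k_def by simp
  then have "l * tau^k' < 2" using tau_pos by (simp add: field_simps)
  then have "l * tau^k < 2 * tau" using kk tau_pos by (simp add: algebra_simps)
  then have tk: "tau^k < 2*tau/l" using l0 by (simp add: field_simps)
  define c' where "c' = a + sqrt 5 * (phi - a) / tau"
  obtain n j :: int where h: "a < of_int n - of_int j*tau" "of_int n - of_int j*tau < a + 2/tau^k"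
    "c' - 2*tau^k < of_int n - of_int j + of_int j*tau" "of_int n - of_int j + of_int j*tau < c' - 2*tau^k + 4*tau^k"
    using box[of a k "c' - 2*tau^k"] by blast
  define z where "z = of_int n - of_int j*tau"
  define z' where "z' = of_int n - of_int j + of_int j*tau"
  define e1 where "e1 = z - a"
  define e2 where "e2 = z' - c'"
  have e1b: "0 < e1" "e1 < l" using h(1,2) kP unfolding e1_def z_def by auto
  have e2b: "\<bar>e2\<bar> < 2*tau^k" using h(3,4) unfolding e2_def z'_def by auto
  have tj: "tau * of_int j = of_int j * tau" by simp
  have "rmod (of_int n - a) tau = (of_int n - a) - tau * of_int j"
    apply (intro rmod_eqI tau_pos)
    using e1b lt tj unfolding e1_def z_def by linarith+
  then have "rmod (of_int n - a) tau = e1" unfolding e1_def z_def by simp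
  then have mem: "n \<in> Zab a b" using e1b unfolding mem_Zab l_def by simp
  have zz: "z' - z = of_int j * sqrt 5" unfolding z_def z'_def sqrt5_tau by (simp add: algebra_simps)
  have cc: "sqrt 5 * phi = sqrt 5 * a + tau * (c' - a)" unfolding c'_def using tau_pos by (simp add: field_simps)
  have key: "sqrt 5 * (of_int n - phi) = (sqrt 5 - tau) * e1 + tau * e2"
  proof -
    have "sqrt 5 * of_int n = sqrt 5 * z + tau * (of_int j * sqrt 5)" unfolding z_def by (simp add: algebra_simps)
    also have "\<dots> = sqrt 5 * z + tau * (z' - z)" using zz by simp
    finally have "sqrt 5 * of_int n = sqrt 5 * z + tau * (z' - z)" .
    then show ?thesis using cc unfolding e1_def e2_def by (simp add: algebra_simps)
  qed
  have b1: "\<bar>(sqrt 5 - tau) * e1\<bar> \<le> 1 * 2"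
  proof -
    have "\<bar>(sqrt 5 - tau) * e1\<bar> = (sqrt 5 - tau) * e1" using e1b sqrt5_bounds tau_bounds by simp
    also have "\<dots> \<le> 1 * 2" using e1b lt sqrt5_bounds tau_bounds by (intro mult_mono) auto
    finally show ?thesis .
  qed
  have b2: "\<bar>tau * e2\<bar> \<le> tau * (2 * (2*tau/l))"
  proof -
    have "\<bar>tau * e2\<bar> = tau * \<bar>e2\<bar>" using tau_pos by (simp add: abs_mult)
    also have "\<dots> \<le> tau * (2 * (2*tau/l))" using e2b tk tau_pos by (intro mult_left_mono) auto
    finally show ?thesis .
  qed
  have "tau * (2 * (2*tau/l)) = 4 * tau^2 / l" by (simp add: power2_eq_square)
  also have "\<dots> \<le> 4 * 3 / l" using tau_sq tau_bounds l0 by (intro divide_right_mono) auto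
  finally have b2': "\<bar>tau * e2\<bar> \<le> 12 / l" using b2 by simp
  have "2 \<le> 4 / l" using lt tau_bounds l0 by (simp add: field_simps)
  moreover have "\<bar>(sqrt 5 - tau) * e1 + tau * e2\<bar> \<le> \<bar>(sqrt 5 - tau) * e1\<bar> + \<bar>tau * e2\<bar>"
    by (rule abs_triangle_ineq)
  moreover have "12 / l + 4 / l = 16 / l" by (simp add: add_divide_distrib[symmetric])
  ultimately have "\<bar>sqrt 5 * (of_int n - phi)\<bar> \<le> 16 / l" using key b1 b2' by linarith
  then have "sqrt 5 * \<bar>of_int n - phi\<bar> \<le> 16 / l" by (simp add: abs_mult)
  moreover have "2 * \<bar>of_int n - phi\<bar> \<le> sqrt 5 * \<bar>of_int n - phi\<bar>" using sqrt5_bounds by (intro mult_right_mono) auto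
  ultimately have "2 * \<bar>of_int n - phi\<bar> \<le> 16 / l" by linarith
  then have "\<bar>of_int n - phi\<bar> \<le> 8 / l" by simp
  also have "\<dots> \<le> 11 / l" using l0 by (simp add: divide_right_mono)
  finally show ?thesis using mem l_def by blast
qed



lemma w_bounds: "1 / (12 * (1 + x^2)) \<le> w x" "w x \<le> 1 / (1 + x^2)"
proof -
  obtain z where z: "x < z" "z < x + 1" "arctan (x+1) - arctan x = (x + 1 - x) * inverse (1 + z^2)"
    using MVT2[of x "x+1" arctan "\<lambda>t. inverse (1 + t^2)"] DERIV_arctan by auto
  have wz: "w x = 1 / (pi * (1 + z^2))" unfolding w_def using z(3) by (simp add: field_simps)
  have sq: "\<And>p q::real. (p + q)^2 \<le> 2*p^2 + 2*q^2"
  proof -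
    fix p q :: real have "0 \<le> (p - q)^2" by simp
    then show "(p + q)^2 \<le> 2*p^2 + 2*q^2" by (simp add: power2_eq_square algebra_simps)
  qed
  have th: "(z - x)^2 \<le> 1" using z by (simp add: power_le_one abs_le_square_iff)
  have "z^2 \<le> 2*x^2 + 2*(z-x)^2" using sq[of x "z - x"] by simp
  moreover have "3 * (1 + x^2) = 3 + 3 * x^2" by simp
  ultimately have a1: "1 + z^2 \<le> 3 * (1 + x^2)" using th zero_le_power2[of x] by linarith
  have "x^2 \<le> 2*z^2 + 2*(z-x)^2" using sq[of z "x - z"] by (simp add: power2_commute)
  moreover have "3 * (1 + z^2) = 3 + 3 * z^2" by simp
  ultimately have a2: "1 + x^2 \<le> 3 * (1 + z^2)" using th zero_le_power2[of z] by linarith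
  have p3: "3 < pi" "pi < 4" using pi_gt3 pi_less_4 by auto
  have pz: "0 < 1 + z^2" by (simp add: add_pos_nonneg)
  have px: "0 < 1 + x^2" by (simp add: add_pos_nonneg)
  have "1 / (12 * (1 + x^2)) \<le> 1 / (pi * (1 + z^2))"
  proof (rule divide_left_mono)
    have "pi * (1 + z^2) \<le> 4 * (3 * (1 + x^2))" using p3 a1 pz by (intro mult_mono) auto
    then show "pi * (1 + z^2) \<le> 12 * (1 + x^2)" using px by linarith
  qed (use px pz p3 in auto)
  then show "1 / (12 * (1 + x^2)) \<le> w x" using wz by simp
  have "1 / (pi * (1 + z^2)) \<le> 1 / (1 + x^2)"
  proof (rule divide_left_mono)
    have "3 * (1 + z^2) \<le> pi * (1 + z^2)" using p3 pz by (intro mult_right_mono) auto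
    then show "1 + x^2 \<le> pi * (1 + z^2)" using a2 by linarith
  qed (use px pz p3 in auto)
  then show "w x \<le> 1 / (1 + x^2)" using wz by simp
qed

lemma w_pos: "0 < w x"
proof -
  have "0 < 1 / (12 * (1 + x^2))" by (simp add: add_pos_nonneg)
  then show ?thesis using w_bounds(1)[of x] by linarith
qed

lemma floor_sep:
  assumes "g0 > 0" "g0 \<le> \<bar>u - v\<bar>"
  shows "\<lfloor>u / g0\<rfloor> \<noteq> \<lfloor>v / g0\<rfloor>"
proof -
  have *: "\<lfloor>p / g0\<rfloor> < \<lfloor>q / g0\<rfloor>" if "p + g0 \<le> q" for p q
  proof -
    have "(p + g0) / g0 \<le> q / g0" using that assms(1) by (intro divide_right_mono) auto
    moreover have "(p + g0) / g0 = p / g0 + 1" using assms(1) by (simp add: add_divide_distrib)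
    ultimately have "p / g0 + 1 \<le> q / g0" by simp
    then have "\<lfloor>p / g0 + 1\<rfloor> \<le> \<lfloor>q / g0\<rfloor>" by (rule floor_mono)
    then have "\<lfloor>p / g0\<rfloor> + 1 \<le> \<lfloor>q / g0\<rfloor>" by simp
    then show ?thesis by simp
  qed
  show ?thesis
  proof (cases "u \<le> v")
    case True then have "u + g0 \<le> v" using assms by simp
    then show ?thesis using * by fastforce
  next
    case False then have "v + g0 \<le> u" using assms by simp
    then show ?thesis using * by fastforce
  qed
qed

lemma telescope: "(\<Sum>k\<in>{1..M::nat}. 2/(2*real k - 1) - 2/(2*real k + 1)) = 2 - 2/(2*real M + 1)"
proof (induction M)
  case 0 then show ?case by simp
next
  case (Suc M)
  have "(\<Sum>k\<in>{1..Suc M}. 2/(2*real k - 1) - 2/(2*real k + 1))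
      = (2 - 2/(2*real M + 1)) + (2/(2*real (Suc M) - 1) - 2/(2*real (Suc M) + 1))"
    using Suc by simp
  also have "2*real (Suc M) - 1 = 2 * real M + 1" by simp
  finally show ?case by simp
qed

lemma side_sum:
  fixes e :: "'a \<Rightarrow> real"
  assumes fin: "finite F" and g0: "g0 > 0" and ge: "\<And>x. x \<in> F \<Longrightarrow> g0 \<le> e x"
    and sep: "\<And>x y. x \<in> F \<Longrightarrow> y \<in> F \<Longrightarrow> x \<noteq> y \<Longrightarrow> g0 \<le> \<bar>e x - e y\<bar>"
  shows "(\<Sum>x\<in>F. 1 / (1 + (e x)^2)) \<le> 2 / g0^2"
proof -
  define \<kappa> where "\<kappa> x = nat \<lfloor>e x / g0\<rfloor>" for x
  define t where "t k = 2/(2*real k - 1) - 2/(2*real k + 1)" for k :: nat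
  have kap1: "1 \<le> \<kappa> x" "real (\<kappa> x) * g0 \<le> e x" if "x \<in> F" for x
  proof -
    have "1 \<le> e x / g0" using ge[OF that] g0 by simp
    then show "1 \<le> \<kappa> x" unfolding \<kappa>_def by linarith
    have "real_of_int \<lfloor>e x / g0\<rfloor> \<le> e x / g0" by linarith
    moreover have "0 \<le> \<lfloor>e x / g0\<rfloor>" using \<open>1 \<le> e x / g0\<close> by linarith
    ultimately have "real (\<kappa> x) \<le> e x / g0" unfolding \<kappa>_def by simp
    then show "real (\<kappa> x) * g0 \<le> e x" using g0 by (simp add: field_simps)
  qed
  have inj: "inj_on \<kappa> F"
  proof (rule inj_onI)
    fix x y assume xy: "x \<in> F" "y \<in> F" "\<kappa> x = \<kappa> y"
    show "x = y"
    proof (rule ccontr)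
      assume "x \<noteq> y"
      then have "\<lfloor>e x / g0\<rfloor> \<noteq> \<lfloor>e y / g0\<rfloor>" using floor_sep[OF g0 sep[OF xy(1,2)]] by simp
      moreover have fx: "0 \<le> \<lfloor>e x / g0\<rfloor>" using ge[OF xy(1)] g0 by auto
      moreover have fy: "0 \<le> \<lfloor>e y / g0\<rfloor>" using ge[OF xy(2)] g0 by auto
      ultimately show False using xy(3) eq_nat_nat_iff[OF fx fy] unfolding \<kappa>_def by blast
    qed
  qed
  have tpos: "0 \<le> t k" if "1 \<le> k" for k
  proof -
    have "2/(2*real k + 1) \<le> 2/(2*real k - 1)" using that by (intro divide_left_mono) auto
    then show ?thesis unfolding t_def by simp
  qed
  have trm: "1 / (1 + (e x)^2) \<le> t (\<kappa> x) / g0^2" if "x \<in> F" for x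
  proof -
    define k where "k = real (\<kappa> x)"
    have k1: "1 \<le> k" using kap1[OF that] k_def by simp
    have "(k * g0)^2 \<le> (e x)^2" using kap1[OF that] k1 g0 unfolding k_def
      by (intro power_mono) auto
    then have kk0: "k^2 * g0^2 \<le> (e x)^2" by (simp add: power_mult_distrib)
    then have kk: "k^2 * g0^2 \<le> 1 + (e x)^2" by linarith
    have pp: "0 < k^2 * g0^2" using k1 g0 by simp
    have "0 < (1 + (e x)^2) * (k^2 * g0^2)" using pp by (intro mult_pos_pos add_pos_nonneg) auto
    then have "1 / (1 + (e x)^2) \<le> 1 / (k^2 * g0^2)"
      using kk by (intro divide_left_mono) auto
    also have "\<dots> \<le> t (\<kappa> x) / g0^2"
    proof -
      have tk: "t (\<kappa> x) = 4 / (4*k^2 - 1)" unfolding t_def k_def[symmetric] using k1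
        by (simp add: field_simps power2_eq_square)
      have ksq: "1 \<le> k^2" using k1 by (simp add: one_le_power)
      have p1: "0 < 4*k^2 - 1" using ksq by linarith
      have pp2: "0 < (4*k^2) * (4*k^2 - 1)" using p1 ksq by (intro mult_pos_pos) auto
      have "4 / (4*k^2) \<le> 4 / (4*k^2 - 1)" using p1 pp2 by (intro divide_left_mono) auto
      moreover have "4 / (4*k^2) = 1 / k^2" by simp
      ultimately have "1 / k^2 \<le> 4 / (4*k^2 - 1)" by simp
      then have "1 / k^2 / g0^2 \<le> 4 / (4*k^2 - 1) / g0^2" using g0 by (intro divide_right_mono) auto
      then show ?thesis using tk by simp
    qed
    finally show ?thesis .
  qed
  define M where "M = (\<Sum>x\<in>F. \<kappa> x)"
  have sub: "\<kappa> ` F \<subseteq> {1..M}"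
  proof
    fix k assume "k \<in> \<kappa> ` F"
    then obtain x where x: "x \<in> F" "k = \<kappa> x" by auto
    have "\<kappa> x \<le> M" unfolding M_def using fin x(1) by (intro member_le_sum) auto
    then show "k \<in> {1..M}" using kap1[OF x(1)] x(2) by auto
  qed
  have "(\<Sum>x\<in>F. 1 / (1 + (e x)^2)) \<le> (\<Sum>x\<in>F. t (\<kappa> x) / g0^2)"
    using trm by (intro sum_mono) auto
  also have "\<dots> = (\<Sum>x\<in>F. t (\<kappa> x)) / g0^2" by (simp add: sum_divide_distrib)
  also have "(\<Sum>x\<in>F. t (\<kappa> x)) = (\<Sum>k\<in>\<kappa> ` F. t k)" using sum.reindex[OF inj, of t] by simp
  also have "\<dots> \<le> (\<Sum>k\<in>{1..M}. t k)" using sub tpos by (intro sum_mono2) auto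
  also have "\<dots> = 2 - 2/(2*real M + 1)" unfolding t_def by (rule telescope)
  also have "\<dots> \<le> 2" by simp
  finally show ?thesis using g0 by (simp add: divide_right_mono)
qed

lemma mid_card:
  fixes e :: "'a \<Rightarrow> real"
  assumes fin: "finite F" and g0: "g0 > 0" and lt: "\<And>x. x \<in> F \<Longrightarrow> \<bar>e x\<bar> < g0"
    and sep: "\<And>x y. x \<in> F \<Longrightarrow> y \<in> F \<Longrightarrow> x \<noteq> y \<Longrightarrow> g0 \<le> \<bar>e x - e y\<bar>"
  shows "card F \<le> 2"
proof -
  define \<mu> where "\<mu> x = \<lfloor>e x / g0\<rfloor>" for x
  have inj: "inj_on \<mu> F"
    using floor_sep[OF g0 sep] unfolding \<mu>_def by (meson inj_onI)
  have "\<mu> ` F \<subseteq> {-1, 0}"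
  proof
    fix k assume "k \<in> \<mu> ` F"
    then obtain x where x: "x \<in> F" "k = \<mu> x" by auto
    have "-1 < e x / g0" "e x / g0 < 1" using lt[OF x(1)] g0 by (auto simp: field_simps abs_less_iff)
    then have "-1 \<le> \<mu> x" "\<mu> x \<le> 0" unfolding \<mu>_def by linarith+
    then show "k \<in> {-1, 0}" using x(2) by auto
  qed
  then have "card (\<mu> ` F) \<le> card {-1, 0::int}" by (intro card_mono) auto
  then show ?thesis using card_image[OF inj] by simp
qed

lemma total_sum:
  fixes e :: "'a \<Rightarrow> real"
  assumes fin: "finite F" and g0: "g0 > 0" and dge: "\<And>x. x \<in> F \<Longrightarrow> d \<le> \<bar>e x\<bar>" and d0: "0 \<le> d"
    and sep: "\<And>x y. x \<in> F \<Longrightarrow> y \<in> F \<Longrightarrow> x \<noteq> y \<Longrightarrow> g0 \<le> \<bar>e x - e y\<bar>"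
  shows "(\<Sum>x\<in>F. 1 / (1 + (e x)^2)) \<le> 2 / (1 + d^2) + 4 / g0^2"
proof -
  define F0 where "F0 = {x\<in>F. \<bar>e x\<bar> < g0}"
  define Fp where "Fp = {x\<in>F. g0 \<le> e x}"
  define Fm where "Fm = {x\<in>F. g0 \<le> - e x}"
  have U: "F = F0 \<union> (Fp \<union> Fm)" unfolding F0_def Fp_def Fm_def by auto
  have fins: "finite F0" "finite Fp" "finite Fm" using fin unfolding F0_def Fp_def Fm_def by auto
  have dis: "F0 \<inter> (Fp \<union> Fm) = {}" "Fp \<inter> Fm = {}" unfolding F0_def Fp_def Fm_def using g0 by auto
  let ?f = "\<lambda>x. 1 / (1 + (e x)^2)"
  have "sum ?f F = sum ?f F0 + (sum ?f Fp + sum ?f Fm)"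
    using U fins dis by (simp add: sum.union_disjoint)
  moreover have "sum ?f F0 \<le> 2 / (1 + d^2)"
  proof -
    have "sum ?f F0 \<le> of_nat (card F0) * (1 / (1 + d^2))"
    proof (rule sum_bounded_above)
      fix x assume x: "x \<in> F0"
      have "d^2 \<le> \<bar>e x\<bar>^2" using dge[of x] x d0 unfolding F0_def
        by (intro power_mono) auto
      then have "d^2 \<le> (e x)^2" by simp
      then show "?f x \<le> 1 / (1 + d^2)" by (intro divide_left_mono) (auto simp: add_pos_nonneg)
    qed
    moreover have "card F0 \<le> 2" using mid_card[OF fins(1) g0, of e] sep unfolding F0_def by auto
    moreover have "of_nat (card F0) * (1 / (1 + d^2)) \<le> (2::real) * (1 / (1 + d^2))"
      using \<open>card F0 \<le> 2\<close> by (intro mult_right_mono) (auto simp: add_pos_nonneg)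
    ultimately show ?thesis by simp
  qed
  moreover have "sum ?f Fp \<le> 2 / g0^2"
    using side_sum[OF fins(2) g0, of e] sep unfolding Fp_def by auto
  moreover have "sum ?f Fm \<le> 2 / g0^2"
    using side_sum[OF fins(3) g0, of "\<lambda>x. - e x"] sep unfolding Fm_def by (auto simp: abs_minus_commute)
  ultimately show ?thesis by simp
qed



lemma powr32: "0 \<le> x \<Longrightarrow> (x::real) powr (3/2) = x * sqrt x"
proof -
  assume x: "0 \<le> x"
  show ?thesis
  proof (cases "x = 0")
    case False
    have "x powr (3/2) = x powr 1 * x powr (1/2)" using powr_add[of x 1 "1/2"] by simp
    also have "\<dots> = x * sqrt x" using x False by (simp add: powr_half_sqrt)
    finally show ?thesis .
  qed simp
qed

lemma powr52: "0 \<le> x \<Longrightarrow> (x::real) powr (5/2) = x^2 * sqrt x"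
proof -
  assume x: "0 \<le> x"
  show ?thesis
  proof (cases "x = 0")
    case False
    have "x powr (5/2) = x powr 2 * x powr (1/2)" using powr_add[of x 2 "1/2"] by simp
    also have "\<dots> = x^2 * sqrt x" using x False by (simp add: powr_half_sqrt)
    finally show ?thesis .
  qed simp
qed

lemma sum_helper:
  fixes f gg :: "int \<Rightarrow> real"
  assumes fb: "\<And>F. finite F \<Longrightarrow> F \<subseteq> S \<Longrightarrow> sum gg F \<le> B"
    and f: "\<And>n. n \<in> S \<Longrightarrow> 0 \<le> f n \<and> f n \<le> c * gg n" and c: "0 \<le> c"
  shows "f summable_on S" "infsum f S \<le> c * B"
proof -
  have fs: "sum f F \<le> c * B" if "finite F" "F \<subseteq> S" for F
  proof -
    have "sum f F \<le> sum (\<lambda>n. c * gg n) F" using f that by (intro sum_mono) auto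
    also have "\<dots> = c * sum gg F" by (simp add: sum_distrib_left)
    also have "\<dots> \<le> c * B" using fb[OF that] c by (intro mult_left_mono) auto
    finally show ?thesis .
  qed
  show sm: "f summable_on S"
    apply (rule nonneg_bdd_above_summable_on)
    using f apply blast
    using fs unfolding bdd_above_def by blast
  show "infsum f S \<le> c * B" using infsum_le_finite_sums[OF sm] fs by blast
qed

theorem corollary14:
  shows "\<exists>C > (0::real). \<forall>a b phi :: real. rmod a tau \<noteq> rmod b tau \<longrightarrow>
     (\<Sum>\<^sub>\<infinity>n\<in>Zab a b. w (of_int n - phi) powr (3/2))
       \<le> C * ((\<Sum>\<^sub>\<infinity>n\<in>Zab a b. w (of_int n - phi) powr (5/2))
               / (\<Sum>\<^sub>\<infinity>n\<in>Zab a b. w (of_int n - phi)))"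
proof -
  define K :: real where "K = 2 + 4 * 5930"
  have K0: "0 < K" unfolding K_def by simp
  show ?thesis
  proof (intro exI[of _ "576 * K^2"] conjI allI impI)
    show "0 < 576 * K^2" using K0 by simp
    fix a b phi :: real
    assume neq: "rmod a tau \<noteq> rmod b tau"
    define l where "l = rmod (b - a) tau"
    have l0: "0 < l" unfolding l_def using ell_pos[OF neq] .
    define S where "S = Zab a b"
    obtain n0 where n0: "n0 \<in> S" "\<bar>of_int n0 - phi\<bar> \<le> 11 / l"
      using cover[OF ell_pos[OF neq], of phi] unfolding S_def l_def by blast
    define T where "T = {n \<in> S. \<bar>of_int n - phi\<bar> \<le> 11 / l}"
    have "T \<subseteq> {\<lfloor>phi - 11/l\<rfloor> .. \<lceil>phi + 11/l\<rceil>}"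
    proof
      fix n assume "n \<in> T"
      then have "\<bar>of_int n - phi\<bar> \<le> 11 / l" unfolding T_def by simp
      then show "n \<in> {\<lfloor>phi - 11/l\<rfloor> .. \<lceil>phi + 11/l\<rceil>}" by (auto simp: abs_le_iff; linarith)
    qed
    then have finT: "finite T" by (rule finite_subset) simp
    have n0T: "n0 \<in> T" using n0 unfolding T_def by simp
    define v where "v = Min ((\<lambda>n. \<bar>of_int n - phi\<bar>) ` T)"
    have "v \<in> (\<lambda>n. \<bar>of_int n - phi\<bar>) ` T" unfolding v_def using finT n0T by (intro Min_in) auto
    then obtain m where mT: "m \<in> T" and mv: "v = \<bar>of_int m - phi\<bar>" by auto
    have mS: "m \<in> S" using mT unfolding T_def by simp
    have minT: "\<bar>of_int m - phi\<bar> \<le> \<bar>of_int n - phi\<bar>" if "n \<in> T" for n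
      using Min_le[of "(\<lambda>n. \<bar>of_int n - phi\<bar>) ` T"] finT that mv unfolding v_def by auto
    have minS: "\<bar>of_int m - phi\<bar> \<le> \<bar>of_int n - phi\<bar>" if "n \<in> S" for n
    proof (cases "n \<in> T")
      case True then show ?thesis using minT by simp
    next
      case False
      then have "11 / l < \<bar>of_int n - phi\<bar>" using that unfolding T_def by auto
      moreover have "\<bar>of_int m - phi\<bar> \<le> \<bar>of_int n0 - phi\<bar>" using minT n0T by simp
      ultimately show ?thesis using n0(2) by linarith
    qed
    define d where "d = \<bar>of_int m - phi\<bar>"
    define D where "D = 1 + d^2"
    have D1: "1 \<le> D" unfolding D_def by simp
    define g0 where "g0 = max 1 (1 / (7 * l))"
    have g01: "1 \<le> g0" unfolding g0_def by simp
    have sep: "g0 \<le> \<bar>(of_int x - phi) - (of_int y - phi)\<bar>" if "x \<in> S" "y \<in> S" "x \<noteq> y" for x y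
    proof -
      have e: "(of_int x - phi) - (of_int y - phi) = real_of_int (x - y)" by simp
      have "1 \<le> \<bar>real_of_int (x - y)\<bar>" using that(3) by linarith
      moreover have "1 \<le> 7 * l * \<bar>real_of_int (x - y)\<bar>" using gap[of x a b y] that unfolding S_def l_def by simp
      then have "1 / (7 * l) \<le> \<bar>real_of_int (x - y)\<bar>" using l0 by (simp add: field_simps)
      ultimately show ?thesis unfolding g0_def e by simp
    qed
    have dg: "d \<le> 77 * g0"
    proof -
      have "d \<le> 11 / l" using minS[OF n0(1)] n0(2) unfolding d_def by simp
      also have "11 / l = 77 * (1 / (7 * l))" by simp
      also have "\<dots> \<le> 77 * g0" unfolding g0_def by simp
      finally show ?thesis .
    qed
    define gg where "gg n = 1 / (1 + (of_int n - phi)^2)" for n :: int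
    have finsum: "sum gg F \<le> K / D" if "finite F" "F \<subseteq> S" for F
    proof -
      have "sum gg F \<le> 2 / (1 + d^2) + 4 / g0^2"
        unfolding gg_def
        apply (rule total_sum[OF that(1), of g0 d "\<lambda>n. of_int n - phi"])
        using g01 apply simp
        using minS that(2) unfolding d_def apply blast
        unfolding d_def apply simp
        using sep that(2) by blast
      moreover have "4 / g0^2 \<le> 4 * 5930 / D"
      proof -
        have "d^2 \<le> (77 * g0)^2" using dg unfolding d_def by (intro power_mono) auto
        moreover have "1 \<le> g0^2" using g01 by simp
        ultimately have "D \<le> 5930 * g0^2" unfolding D_def by (simp add: power_mult_distrib)
        then show ?thesis using D1 g01 by (simp add: field_simps)
      qed
      ultimately show ?thesis unfolding K_def D_def by (simp add: add_divide_distrib)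
    qed
    have wpos: "0 < w (of_int n - phi)" for n using w_pos .
    have wgg: "w (of_int n - phi) \<le> gg n" for n unfolding gg_def using w_bounds(2) .
    have gg1: "gg n \<le> 1" for n unfolding gg_def by (simp add: add_pos_nonneg)
    have ggD: "gg n \<le> 1 / D" if "n \<in> S" for n
    proof -
      have "d^2 \<le> (of_int n - phi)^2"
        using minS[OF that] unfolding d_def by (metis abs_le_square_iff power2_abs)
      then show ?thesis unfolding gg_def D_def by (intro divide_left_mono) (auto simp: add_pos_nonneg)
    qed
    have w1: "w (of_int n - phi) \<le> 1" for n using wgg[of n] gg1[of n] by linarith
    let ?fA = "\<lambda>n. w (of_int n - phi)"
    have fA: "0 \<le> ?fA n \<and> ?fA n \<le> 1 * gg n" if "n \<in> S" for n
      using wpos[of n] wgg[of n] by simp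
    note hA = sum_helper[of S gg "K/D" ?fA 1, OF finsum fA]
    let ?fL = "\<lambda>n. w (of_int n - phi) powr (3/2)"
    have fL: "0 \<le> ?fL n \<and> ?fL n \<le> (1 / sqrt D) * gg n" if "n \<in> S" for n
    proof -
      have e: "?fL n = w (of_int n - phi) * sqrt (w (of_int n - phi))" using wpos[of n] by (simp add: powr32)
      have "sqrt (w (of_int n - phi)) \<le> sqrt (1 / D)" using wgg[of n] ggD[OF that] by simp
      then have "w (of_int n - phi) * sqrt (w (of_int n - phi)) \<le> gg n * sqrt (1 / D)"
        using wgg[of n] wpos[of n] by (intro mult_mono) auto
      then show ?thesis using e wpos[of n] by (simp add: real_sqrt_divide)
    qed
    have c0: "0 \<le> 1 / sqrt D" using D1 by simp
    note hL = sum_helper[of S gg "K/D" ?fL "1 / sqrt D", OF finsum fL c0]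
    let ?fB = "\<lambda>n. w (of_int n - phi) powr (5/2)"
    have fB: "0 \<le> ?fB n \<and> ?fB n \<le> 1 * gg n" if "n \<in> S" for n
    proof -
      have e: "?fB n = (w (of_int n - phi))^2 * sqrt (w (of_int n - phi))" using wpos[of n] by (simp add: powr52)
      have "(w (of_int n - phi))^2 \<le> w (of_int n - phi)" using w1[of n] wpos[of n] by (simp add: power2_eq_square mult_le_cancel_left1)
      moreover have "sqrt (w (of_int n - phi)) \<le> 1" using w1[of n] by simp
      ultimately have "(w (of_int n - phi))^2 * sqrt (w (of_int n - phi)) \<le> w (of_int n - phi) * 1"
        using wpos[of n] by (intro mult_mono) auto
      then show ?thesis using e wpos[of n] wgg[of n] by simp
    qed
    note hB = sum_helper(1)[of S gg "K/D" ?fB 1, OF finsum fB]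
    have Bge: "?fB m \<le> infsum ?fB S"
    proof -
      have "infsum ?fB {m} \<le> infsum ?fB S"
        using hB mS by (intro infsum_mono2) (auto simp: less_imp_le wpos)
      then show ?thesis by simp
    qed
    have Age: "?fA m \<le> infsum ?fA S"
    proof -
      have "infsum ?fA {m} \<le> infsum ?fA S"
        using hA mS by (intro infsum_mono2) (auto simp: less_imp_le wpos)
      then show ?thesis by simp
    qed
    have wm: "1 / (12 * D) \<le> w (of_int m - phi)"
      using w_bounds(1)[of "of_int m - phi"] unfolding D_def d_def by simp
    have "(1 / (12 * D))^2 * sqrt (1 / (12 * D)) \<le> (w (of_int m - phi))^2 * sqrt (w (of_int m - phi))"
      using wm D1 by (intro mult_mono power_mono) auto
    moreover have "(1 / (12 * D))^2 * sqrt (1 / (12 * D)) = 1 / (144 * D^2 * (sqrt 12 * sqrt D))"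
      by (simp add: power_mult_distrib real_sqrt_divide real_sqrt_mult power_divide)
    moreover have "1 / (576 * D^2 * sqrt D) \<le> 1 / (144 * D^2 * (sqrt 12 * sqrt D))"
    proof -
      have "sqrt 12 \<le> sqrt (4^2)" by (subst real_sqrt_le_iff) simp
      then have "sqrt 12 \<le> 4" by simp
      then have "144 * D^2 * (sqrt 12 * sqrt D) \<le> 144 * D^2 * (4 * sqrt D)"
        using D1 by (intro mult_left_mono mult_right_mono) auto
      then show ?thesis using D1 by (intro divide_left_mono) auto
    qed
    ultimately have Bl: "1 / (576 * D^2 * sqrt D) \<le> infsum ?fB S"
      using Bge wpos[of m] by (simp add: powr52)
    have Apos: "0 < infsum ?fA S" using Age wpos[of m] by linarith
    have L0: "0 \<le> infsum ?fL S" by (intro infsum_nonneg) simp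
    have "infsum ?fL S * infsum ?fA S \<le> ((1 / sqrt D) * (K / D)) * (K / D)"
      using hL(2) hA(2) L0 Apos by (intro mult_mono) auto
    also have "\<dots> = 576 * K^2 * (1 / (576 * D^2 * sqrt D))"
      using D1 by (simp add: field_simps power2_eq_square)
    also have "\<dots> \<le> 576 * K^2 * infsum ?fB S"
      using Bl K0 by (intro mult_left_mono) auto
    finally have "infsum ?fL S * infsum ?fA S \<le> 576 * K^2 * infsum ?fB S" .
    then have "infsum ?fL S \<le> 576 * K^2 * infsum ?fB S / infsum ?fA S"
      using Apos by (simp add: pos_le_divide_eq)
    then show "infsum ?fL (Zab a b) \<le> 576 * K^2 * (infsum ?fB (Zab a b) / infsum ?fA (Zab a b))"
      unfolding S_def by simp
  qed
qed


end
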